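(* Let $f:\mathbb{E}\to\mathbb{R}$ be continuous on some neighborhood of $\bar x\in\mathbb{E}$ and $\ell$-stable at $\bar x$, and suppose $f$ is strongly pseudoconvex at the point $\bar x$. Then $\bar x$ is an isolated local minimizer of second order of $f$ if and only if $\nabla f(\bar x)=0$ (the Fréchet derivative of $f$ at $\bar x$ exists under these hypotheses).
   Context: $\mathbb{E}$ is a real finite-dimensional Euclidean space with norm $\|\cdot\|$. Lower Dini directional derivative: $f'_D(y;u)=\liminf_{t\downarrow 0}t^{-1}[f(y+tu)-f(y)]$. $f$ is $\ell$-stable at $x$ iff there exist a neighborhood $U$ of $x$ and $K>0$ with $|f'_D(y;u)-f'_D(x;u)|\le K\|y-x\|\,\|u\|$ for all $y\in U$, $u\in\mathbb{E}$. $f$ is strongly pseudoconvex at $x$ iff for every $u\in\mathbb{E}$ with $\|u\|=1$ and $f'_D(x;u)=0$ there exist $\delta>0$, $\alpha>0$ with $f(x+tu)\ge f(x)+\alpha t^2$ for all $t\in(0,\delta)$. A point $\bar x$ is an isolated local minimizer of second order iff there exist a neighborhood $N$ of $\bar x$ and $C>0$ with $f(x)>f(\bar x)+C\|x-\bar x\|^2$ for all $x\in N\setminus\{\bar x\}$. *)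

theory Defs
  imports "HOL-Analysis.Analysis"
begin

definition dini_lower :: "('a::real_normed_vector \<Rightarrow> real) \<Rightarrow> 'a \<Rightarrow> 'a \<Rightarrow> ereal" where
  "dini_lower f y u = Liminf (at_right (0::real)) (\<lambda>t. ereal ((f (y + t *\<^sub>R u) - f y) / t))"

definition l_stable :: "('a::real_normed_vector \<Rightarrow> real) \<Rightarrow> 'a \<Rightarrow> bool" where
  "l_stable f x \<longleftrightarrow> (\<exists>U K. open U \<and> x \<in> U \<and> K > 0 \<and>
     (\<forall>y\<in>U. \<forall>u. \<bar>dini_lower f y u\<bar> \<noteq> \<infinity> \<and> \<bar>dini_lower f x u\<bar> \<noteq> \<infinity> \<and>
        \<bar>real_of_ereal (dini_lower f y u) - real_of_ereal (dini_lower f x u)\<bar>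
          \<le> K * norm (y - x) * norm u))"

definition strongly_pseudoconvex_at :: "('a::real_normed_vector \<Rightarrow> real) \<Rightarrow> 'a \<Rightarrow> bool" where
  "strongly_pseudoconvex_at f x \<longleftrightarrow> (\<forall>u. norm u = 1 \<and> dini_lower f x u = 0 \<longrightarrow>
     (\<exists>\<delta>>0. \<exists>\<alpha>>0. \<forall>t. 0 < t \<and> t < \<delta> \<longrightarrow> f (x + t *\<^sub>R u) \<ge> f x + \<alpha> * t\<^sup>2))"

definition isolated_local_min_2 :: "('a::real_normed_vector \<Rightarrow> real) \<Rightarrow> 'a \<Rightarrow> bool" where
  "isolated_local_min_2 f x \<longleftrightarrow> (\<exists>N C. open N \<and> x \<in> N \<and> C > 0 \<and>
     (\<forall>y\<in>N - {x}. f y > f x + C * (norm (y - x))\<^sup>2))"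

end

theory Submission
  imports Defs
begin

lemma dini_mvt_lower:
  fixes g :: "real \<Rightarrow> real"
  assumes ab: "a \<le> b" and cont: "continuous_on {a..b} g"
    and D: "\<And>s. a \<le> s \<Longrightarrow> s < b \<Longrightarrow> ereal m \<le> Liminf (at_right 0) (\<lambda>t. ereal ((g (s+t) - g s)/t))"
  shows "m*(b-a) \<le> g b - g a"
proof -
  have key: "(m - e)*(b-a) \<le> g b - g a" if e: "e > 0" for e
  proof (rule ccontr)
    assume neg: "\<not> ?thesis"
    define h where "h = (\<lambda>s. g s - (m - e) * s)"
    have hb: "h b < h a" using neg by (simp add: h_def algebra_simps)
    define S where "S = {s\<in>{a..b}. h a \<le> h s}"
    have ch: "continuous_on {a..b} h" unfolding h_def by (intro continuous_intros cont)
    have "closed S" unfolding S_def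
      by (rule continuous_on_closed_Collect_le[OF continuous_on_const ch]) simp
    moreover have "bdd_above S" unfolding S_def by (auto intro: bdd_aboveI[of _ b])
    moreover have "a \<in> S" using ab by (simp add: S_def)
    ultimately have cS: "Sup S \<in> S" using closed_contains_Sup by blast
    define c where "c = Sup S"
    have cS': "c \<in> S" using cS c_def by simp
    have "c \<noteq> b" using cS' hb by (auto simp: S_def)
    hence cb: "c < b" "a \<le> c" using cS' by (auto simp: S_def)
    have "ereal (m - e) < Liminf (at_right 0) (\<lambda>t. ereal ((g (c+t) - g c)/t))"
      using D[OF cb(2) cb(1)] e less_le_trans[of "ereal (m - e)" "ereal m"] by simp
    hence ev: "eventually (\<lambda>t. ereal (m - e) < ereal ((g (c+t) - g c)/t)) (at_right 0)"
      by (rule less_LiminfD)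
    then obtain d where d: "d > 0" "\<And>t. t > 0 \<Longrightarrow> t < d \<Longrightarrow> m - e < (g (c+t) - g c)/t"
      unfolding eventually_at_right_field by auto
    define t where "t = min (d/2) ((b - c)/2)"
    have t: "t > 0" "t < d" "c + t \<le> b" using d(1) cb unfolding t_def min_def by (auto simp: field_simps)
    have "m - e < (g (c+t) - g c)/t" using d t by auto
    hence "(m - e)*t < g (c+t) - g c" using t by (simp add: field_simps)
    hence "h c < h (c + t)" by (simp add: h_def algebra_simps)
    hence "c + t \<in> S" using cS' t by (auto simp: S_def)
    hence "c + t \<le> c" unfolding c_def using \<open>bdd_above S\<close> by (rule cSup_upper)
    thus False using t by simp
  qed
  show ?thesis
  proof (cases "a = b")
    case True thus ?thesis by simp
  next
    case False
    hence ba: "b - a > 0" using ab by simp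
    show ?thesis
    proof (rule ccontr)
      assume nt: "\<not> ?thesis"
      define e where "e = (m*(b-a) - (g b - g a))/(2*(b-a))"
      have e: "e > 0" using nt ba by (simp add: e_def)
      have "(m - e)*(b-a) = m*(b-a) - (m*(b-a) - (g b - g a))/2"
        using ba by (simp add: e_def field_simps)
      thus False using key[OF e] nt by argo
    qed
  qed
qed

lemma dini_mvt_upper:
  fixes g :: "real \<Rightarrow> real"
  assumes ab: "a \<le> b" and cont: "continuous_on {a..b} g"
    and D: "\<And>s. a \<le> s \<Longrightarrow> s < b \<Longrightarrow> Liminf (at_right 0) (\<lambda>t. ereal ((g (s+t) - g s)/t)) \<le> ereal M"
  shows "g b - g a \<le> M*(b-a)"
proof -
  have key: "g b - g a \<le> (M + e)*(b-a)" if e: "e > 0" for e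
  proof (rule ccontr)
    assume neg: "\<not> ?thesis"
    define h where "h = (\<lambda>s. g s - (M + e) * s)"
    have hb: "h a < h b" using neg by (simp add: h_def algebra_simps)
    define S where "S = {s\<in>{a..b}. h s \<le> h a}"
    have ch: "continuous_on {a..b} h" unfolding h_def by (intro continuous_intros cont)
    have "closed S" unfolding S_def
      by (rule continuous_on_closed_Collect_le[OF ch continuous_on_const]) simp
    moreover have "bdd_above S" unfolding S_def by (auto intro: bdd_aboveI[of _ b])
    moreover have "a \<in> S" using ab by (simp add: S_def)
    ultimately have cS: "Sup S \<in> S" using closed_contains_Sup by blast
    define c where "c = Sup S"
    have cS': "c \<in> S" using cS c_def by simp
    have "c \<noteq> b" using cS' hb by (auto simp: S_def)
    hence cb: "c < b" "a \<le> c" using cS' by (auto simp: S_def)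
    have fr: "frequently (\<lambda>t. (g (c+t) - g c)/t < M + e) (at_right 0)"
    proof (rule ccontr)
      assume "\<not> ?thesis"
      hence "eventually (\<lambda>t. ereal (M + e) \<le> ereal ((g (c+t) - g c)/t)) (at_right 0)"
        unfolding not_frequently by (auto elim!: eventually_mono)
      hence "ereal (M + e) \<le> Liminf (at_right 0) (\<lambda>t. ereal ((g (c+t) - g c)/t))"
        by (rule Liminf_bounded)
      hence "ereal (M + e) \<le> ereal M" using D[OF cb(2) cb(1)] by (rule order_trans)
      thus False using e by simp
    qed
    have ev: "eventually (\<lambda>t. 0 < t \<and> t < b - c) (at_right (0::real))"
      unfolding eventually_at_right_field using cb by (auto intro!: exI[of _ "b - c"])
    obtain t where t: "(g (c+t) - g c)/t < M + e" "0 < t" "t < b - c"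
      using frequently_ex[OF frequently_eventually_frequently[OF fr ev]] by auto
    hence "g (c+t) - g c < (M + e)*t" by (simp add: field_simps)
    hence "h (c + t) < h c" by (simp add: h_def algebra_simps)
    hence "c + t \<in> S" using cS' t by (auto simp: S_def)
    hence "c + t \<le> c" unfolding c_def using \<open>bdd_above S\<close> by (rule cSup_upper)
    thus False using t by simp
  qed
  show ?thesis
  proof (cases "a = b")
    case True thus ?thesis by simp
  next
    case False
    hence ba: "b - a > 0" using ab by simp
    show ?thesis
    proof (rule ccontr)
      assume nt: "\<not> ?thesis"
      define e where "e = ((g b - g a) - M*(b-a))/(2*(b-a))"
      have e: "e > 0" using nt ba by (simp add: e_def)
      have "(M + e)*(b-a) = M*(b-a) + ((g b - g a) - M*(b-a))/2"
        using ba by (simp add: e_def field_simps)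
      thus False using key[OF e] nt by argo
    qed
  qed
qed


lemma seg_in_cball:
  fixes x y z :: "'a::real_normed_vector"
  assumes "y \<in> cball x \<rho>" "z \<in> cball x \<rho>" "0 \<le> s" "s \<le> 1"
  shows "y + s *\<^sub>R (z - y) \<in> cball x \<rho>"
proof -
  have "y + s *\<^sub>R (z - y) - x = (1 - s) *\<^sub>R (y - x) + s *\<^sub>R (z - x)"
    by (simp add: algebra_simps)
  hence "norm (y + s *\<^sub>R (z - y) - x) \<le> norm ((1 - s) *\<^sub>R (y - x)) + norm (s *\<^sub>R (z - x))"
    by (metis norm_triangle_ineq)
  also have "\<dots> = (1 - s) * norm (y - x) + s * norm (z - x)" using assms by simp
  also have "\<dots> \<le> (1 - s) * \<rho> + s * \<rho>"
    using assms by (intro add_mono mult_left_mono) (auto simp: dist_norm norm_minus_commute)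
  finally show ?thesis by (simp add: dist_norm norm_minus_commute algebra_simps)
qed

lemma seg_est:
  fixes f :: "'a::real_normed_vector \<Rightarrow> real"
  assumes cont: "continuous_on (ball x r) f" and K: "K > 0"
    and stab: "\<forall>y\<in>ball x r. \<forall>u. \<bar>dini_lower f y u\<bar> \<noteq> \<infinity> \<and> \<bar>dini_lower f x u\<bar> \<noteq> \<infinity> \<and>
        \<bar>real_of_ereal (dini_lower f y u) - real_of_ereal (dini_lower f x u)\<bar>
          \<le> K * norm (y - x) * norm u"
    and yz: "y \<in> cball x \<rho>" "z \<in> cball x \<rho>" and rr: "\<rho> < r"
  shows "\<bar>f z - f y - real_of_ereal (dini_lower f x (z - y))\<bar> \<le> K * \<rho> * norm (z - y)"
proof -
  define v where "v = z - y"
  define g where "g = (\<lambda>s. f (y + s *\<^sub>R v))"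
  define p where "p = real_of_ereal (dini_lower f x v)"
  have sub: "cball x \<rho> \<subseteq> ball x r" using rr by auto
  have gc: "continuous_on {0..1} g" unfolding g_def
  proof (rule continuous_on_compose2[OF cont])
    show "continuous_on {0..1} (\<lambda>s. y + s *\<^sub>R v)" by (intro continuous_intros)
    show "(\<lambda>s. y + s *\<^sub>R v) ` {0..1} \<subseteq> ball x r"
      using seg_in_cball[OF yz] sub by (auto simp: v_def)
  qed
  have bnd: "ereal (p - K*\<rho>*norm v) \<le> Liminf (at_right 0) (\<lambda>t. ereal ((g (s+t) - g s)/t))
     \<and> Liminf (at_right 0) (\<lambda>t. ereal ((g (s+t) - g s)/t)) \<le> ereal (p + K*\<rho>*norm v)"
    if s: "0 \<le> s" "s < 1" for s
  proof -
    define w where "w = y + s *\<^sub>R v"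
    have wc: "w \<in> cball x \<rho>" using seg_in_cball[OF yz, of s] s by (simp add: w_def v_def)
    hence wb: "w \<in> ball x r" using sub by auto
    have eq: "Liminf (at_right 0) (\<lambda>t. ereal ((g (s+t) - g s)/t)) = dini_lower f w v"
      unfolding dini_lower_def g_def w_def by (simp add: algebra_simps scaleR_add_left)
    have fin: "\<bar>dini_lower f w v\<bar> \<noteq> \<infinity>" and
      est: "\<bar>real_of_ereal (dini_lower f w v) - p\<bar> \<le> K * norm (w - x) * norm v"
      using stab wb unfolding p_def by auto
    have "K * norm (w - x) * norm v \<le> K * \<rho> * norm v"
      using wc K by (intro mult_right_mono mult_left_mono) (auto simp: dist_norm norm_minus_commute)
    hence e2: "\<bar>real_of_ereal (dini_lower f w v) - p\<bar> \<le> K*\<rho>*norm v" using est by linarith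
    have "dini_lower f w v = ereal (real_of_ereal (dini_lower f w v))" using fin by (simp add: ereal_real')
    thus ?thesis unfolding eq using e2
      by (metis abs_diff_le_iff ereal_less_eq(3) diff_le_eq le_diff_eq)
  qed
  have lo: "(p - K*\<rho>*norm v) * (1 - 0) \<le> g 1 - g 0"
    by (rule dini_mvt_lower[OF _ gc]) (use bnd in auto)
  have hi: "g 1 - g 0 \<le> (p + K*\<rho>*norm v) * (1 - 0)"
    by (rule dini_mvt_upper[OF _ gc]) (use bnd in auto)
  have "g 1 = f z" "g 0 = f y" by (auto simp: g_def v_def)
  thus ?thesis using lo hi unfolding p_def v_def by auto
qed


theorem theorem3:
  fixes f :: "'a::euclidean_space \<Rightarrow> real" and xbar :: 'a
  assumes "\<exists>V. open V \<and> xbar \<in> V \<and> continuous_on V f"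
    and "l_stable f xbar"
    and "strongly_pseudoconvex_at f xbar"
  shows "isolated_local_min_2 f xbar \<longleftrightarrow> (f has_derivative (\<lambda>h. 0)) (at xbar)"
proof -
  obtain V where V: "open V" "xbar \<in> V" "continuous_on V f" using assms(1) by blast
  obtain U K where U: "open U" "xbar \<in> U" "K > 0" and
    stabU: "\<forall>y\<in>U. \<forall>u. \<bar>dini_lower f y u\<bar> \<noteq> \<infinity> \<and> \<bar>dini_lower f xbar u\<bar> \<noteq> \<infinity> \<and>
        \<bar>real_of_ereal (dini_lower f y u) - real_of_ereal (dini_lower f xbar u)\<bar>
          \<le> K * norm (y - xbar) * norm u"
    using assms(2) unfolding l_stable_def by blast
  obtain r where r: "r > 0" "ball xbar r \<subseteq> U \<inter> V"
    using open_Int[OF U(1) V(1)] U(2) V(2) by (meson IntI open_contains_ball)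
  have cont: "continuous_on (ball xbar r) f" using V(3) r(2) continuous_on_subset by blast
  have stab: "\<forall>y\<in>ball xbar r. \<forall>u. \<bar>dini_lower f y u\<bar> \<noteq> \<infinity> \<and> \<bar>dini_lower f xbar u\<bar> \<noteq> \<infinity> \<and>
        \<bar>real_of_ereal (dini_lower f y u) - real_of_ereal (dini_lower f xbar u)\<bar>
          \<le> K * norm (y - xbar) * norm u" using stabU r(2) by (meson IntD1 subsetD)
  note E = seg_est[OF cont U(3) stab]
  have finx: "dini_lower f xbar u = ereal (real_of_ereal (dini_lower f xbar u))" for u
    using stabU U(2) by (simp add: ereal_real')
  show ?thesis
  proof
    assume "isolated_local_min_2 f xbar"
    then obtain N C where N: "open N" "xbar \<in> N" "C > 0" and
      NC: "\<forall>y\<in>N - {xbar}. f y > f xbar + C * (norm (y - xbar))\<^sup>2"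
      unfolding isolated_local_min_2_def by blast
    have Nge: "f y \<ge> f xbar" if "y \<in> N" for y
    proof (cases "y = xbar")
      case False
      hence "f y > f xbar + C * (norm (y - xbar))\<^sup>2" using NC that by auto
      moreover have "C * (norm (y - xbar))\<^sup>2 \<ge> 0" using N(3) by simp
      ultimately show ?thesis by linarith
    qed simp
    obtain r' where r': "r' > 0" "ball xbar r' \<subseteq> N" using N open_contains_ball by blast
    have phinn: "real_of_ereal (dini_lower f xbar v) \<ge> 0" for v
    proof -
      have "eventually (\<lambda>t. 0 \<le> ereal ((f (xbar + t *\<^sub>R v) - f xbar)/t)) (at_right 0)"
        unfolding eventually_at_right_field
      proof (intro exI[of _ "r' / (norm v + 1)"] conjI allI impI)
        show "0 < r' / (norm v + 1)" using r' norm_ge_zero[of v] by (intro divide_pos_pos) linarith+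
        fix t :: real assume t: "0 < t" "t < r' / (norm v + 1)"
        have "norm (t *\<^sub>R v) = t * norm v" using t by simp
        also have "\<dots> \<le> t * (norm v + 1)" using t by simp
        also have "\<dots> < r'" using t(2) pos_less_divide_eq[of "norm v + 1" t r'] norm_ge_zero[of v] by linarith
        finally have "xbar + t *\<^sub>R v \<in> N" using r' by (auto simp: dist_norm)
        hence "f (xbar + t *\<^sub>R v) - f xbar \<ge> 0" using Nge by auto
        thus "0 \<le> ereal ((f (xbar + t *\<^sub>R v) - f xbar)/t)" using t by simp
      qed
      hence "0 \<le> dini_lower f xbar v" unfolding dini_lower_def by (rule Liminf_bounded)
      thus ?thesis using finx[of v] by (metis ereal_less_eq(5) zero_ereal_def)
    qed
    have quad: "\<bar>f y - f xbar\<bar> \<le> 3 * K * (norm (y - xbar))\<^sup>2" if y: "norm (y - xbar) < r" for y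
    proof -
      define \<rho> where "\<rho> = norm (y - xbar)"
      have c1: "y \<in> cball xbar \<rho>" "xbar \<in> cball xbar \<rho>"
        by (auto simp: \<rho>_def dist_norm norm_minus_commute)
      have "\<rho> < r" using y by (simp add: \<rho>_def)
      have e1: "\<bar>f y - f xbar - real_of_ereal (dini_lower f xbar (y - xbar))\<bar> \<le> K * \<rho> * \<rho>"
        using E[OF c1(2) c1(1) \<open>\<rho> < r\<close>] by (simp add: \<rho>_def)
      have e2: "\<bar>f xbar - f y - real_of_ereal (dini_lower f xbar (xbar - y))\<bar> \<le> K * \<rho> * \<rho>"
        using E[OF c1(1) c1(2) \<open>\<rho> < r\<close>] by (simp add: \<rho>_def norm_minus_commute)
      have "0 \<le> real_of_ereal (dini_lower f xbar (y - xbar))" "0 \<le> real_of_ereal (dini_lower f xbar (xbar - y))"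
        using phinn by auto
      hence "\<bar>f y - f xbar\<bar> \<le> 3 * (K * \<rho> * \<rho>)" using e1 e2 by (simp add: abs_le_iff)
      thus ?thesis by (simp add: \<rho>_def power2_eq_square)
    qed
    show "(f has_derivative (\<lambda>h. 0)) (at xbar)"
      unfolding has_derivative_at_alt
    proof (intro conjI allI impI)
      show "bounded_linear (\<lambda>h::'a. 0::real)" by simp
      fix e :: real assume e: "e > 0"
      show "\<exists>d>0. \<forall>y. norm (y - xbar) < d \<longrightarrow> norm (f y - f xbar - 0) \<le> e * norm (y - xbar)"
      proof (intro exI[of _ "min r (e / (3*K))"] conjI allI impI)
        show "0 < min r (e / (3*K))" using r e U(3) by simp
        fix y assume y: "norm (y - xbar) < min r (e / (3*K))"
        have "\<bar>f y - f xbar\<bar> \<le> 3 * K * (norm (y - xbar))\<^sup>2" using quad y by simp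
        also have "\<dots> = (3 * K * norm (y - xbar)) * norm (y - xbar)" by (simp add: power2_eq_square)
        also have "\<dots> \<le> e * norm (y - xbar)"
        proof (rule mult_right_mono)
          have "norm (y - xbar) < e / (3*K)" using y by simp
          thus "3 * K * norm (y - xbar) \<le> e" using U(3) by (simp add: field_simps)
        qed simp
        finally show "norm (f y - f xbar - 0) \<le> e * norm (y - xbar)" by simp
      qed
    qed
  next
    assume der: "(f has_derivative (\<lambda>h. 0)) (at xbar)"
    have D0: "dini_lower f xbar u = 0" for u
    proof -
      have "((\<lambda>t. (f (xbar + t *\<^sub>R u) - f xbar)/t) \<longlongrightarrow> 0) (at_right 0)"
        unfolding tendsto_iff
      proof (intro allI impI)
        fix e :: real assume e: "e > 0"
        define e' where "e' = e / (2 * (norm u + 1))"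
        have "0 < 2 * (norm u + 1)" by (smt (verit) norm_ge_zero)
        hence e': "e' > 0" unfolding e'_def using e by (intro divide_pos_pos)
        obtain d where d: "d > 0" "\<And>y. norm (y - xbar) < d \<Longrightarrow> norm (f y - f xbar - 0) \<le> e' * norm (y - xbar)"
          using der e' unfolding has_derivative_at_alt by blast
        show "eventually (\<lambda>t. dist ((f (xbar + t *\<^sub>R u) - f xbar)/t) 0 < e) (at_right 0)"
          unfolding eventually_at_right_field
        proof (intro exI[of _ "d / (norm u + 1)"] conjI allI impI)
          show "0 < d / (norm u + 1)" using d norm_ge_zero[of u] by (intro divide_pos_pos) linarith+
          fix t :: real assume t: "0 < t" "t < d / (norm u + 1)"
          have "norm (t *\<^sub>R u) = t * norm u" using t by simp
          also have "\<dots> \<le> t * (norm u + 1)" using t by simp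
          also have "\<dots> < d" using t(2) pos_less_divide_eq[of "norm u + 1" t d] norm_ge_zero[of u] by linarith
          finally have "\<bar>f (xbar + t *\<^sub>R u) - f xbar\<bar> \<le> e' * (t * norm u)"
            using d(2)[of "xbar + t *\<^sub>R u"] t by simp
          also have "\<dots> \<le> e' * (t * (norm u + 1))" using e' t by (intro mult_left_mono) auto
          also have "\<dots> = t * (e/2)" unfolding e'_def using \<open>0 < 2 * (norm u + 1)\<close> by (simp add: divide_simps)
          also have "\<dots> < t * e" using t e by simp
          finally have "\<bar>f (xbar + t *\<^sub>R u) - f xbar\<bar> / t < e" using t by (simp add: field_simps)
          thus "dist ((f (xbar + t *\<^sub>R u) - f xbar)/t) 0 < e" using t(1) by (simp add: dist_real_def abs_div)
        qed
      qed
      hence "((\<lambda>t. ereal ((f (xbar + t *\<^sub>R u) - f xbar)/t)) \<longlongrightarrow> ereal 0) (at_right 0)"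
        by (rule tendsto_ereal)
      hence "dini_lower f xbar u = ereal 0" unfolding dini_lower_def
        by (intro lim_imp_Liminf) simp_all
      thus ?thesis by (simp add: zero_ereal_def)
    qed
    have Lip: "\<bar>f z - f y\<bar> \<le> K * \<rho> * norm (z - y)"
      if "y \<in> cball xbar \<rho>" "z \<in> cball xbar \<rho>" "\<rho> < r" for y z \<rho>
      using E[OF that] D0 by simp
    show "isolated_local_min_2 f xbar"
    proof (rule ccontr)
      assume nmin: "\<not> isolated_local_min_2 f xbar"
      have "\<exists>y. y \<in> ball xbar (inverse (real (Suc n))) \<and> y \<noteq> xbar \<and>
          f y \<le> f xbar + inverse (real (Suc n)) * (norm (y - xbar))\<^sup>2" for n
      proof -
        have "\<not> (\<forall>y\<in>ball xbar (inverse (real (Suc n))) - {xbar}.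
            f y > f xbar + inverse (real (Suc n)) * (norm (y - xbar))\<^sup>2)"
          using nmin unfolding isolated_local_min_2_def
          by (metis centre_in_ball inverse_positive_iff_positive of_nat_0_less_iff open_ball zero_less_Suc)
        thus ?thesis by (auto simp: not_less)
      qed
      then obtain y where y: "\<And>n. y n \<in> ball xbar (inverse (real (Suc n)))" "\<And>n. y n \<noteq> xbar"
        "\<And>n. f (y n) \<le> f xbar + inverse (real (Suc n)) * (norm (y n - xbar))\<^sup>2"
        by metis
      define tn where "tn n = norm (y n - xbar)" for n
      define un where "un n = (1 / tn n) *\<^sub>R (y n - xbar)" for n
      have tpos: "tn n > 0" for n using y(2) by (simp add: tn_def)
      have tsmall: "tn n < inverse (real (Suc n))" for n
        using y(1)[of n] by (simp add: tn_def dist_norm norm_minus_commute)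
      have yrep: "y n = xbar + tn n *\<^sub>R un n" for n
        using tpos[of n] by (simp add: un_def)
      have unS: "un n \<in> sphere 0 1" for n
        using tpos[of n] by (simp add: un_def tn_def)
      obtain l \<sigma> where l: "l \<in> sphere 0 1" and \<sigma>: "strict_mono \<sigma>" and lim: "(un \<circ> \<sigma>) \<longlonglongrightarrow> l"
        using compact_imp_seq_compact[OF compact_sphere, of 0 1] unS unfolding seq_compact_def by metis
      have nl: "norm l = 1" using l by simp
      obtain \<delta> \<alpha> where \<delta>: "\<delta> > 0" and \<alpha>: "\<alpha> > 0" and
        spc: "\<And>t. 0 < t \<Longrightarrow> t < \<delta> \<Longrightarrow> f (xbar + t *\<^sub>R l) \<ge> f xbar + \<alpha> * t\<^sup>2"
        using assms(3) nl D0[of l] unfolding strongly_pseudoconvex_at_def by blast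
      obtain n0 where n0: "inverse (real (Suc n0)) < min \<delta> r"
        using reals_Archimedean[of "min \<delta> r"] \<delta> r by auto
      have bound: "\<alpha> \<le> K * norm ((un \<circ> \<sigma>) n - l) + inverse (real (Suc (\<sigma> n)))" if "n \<ge> n0" for n
      proof -
        define k where "k = \<sigma> n"
        define t where "t = tn k"
        have "k \<ge> n0" using seq_suble[OF \<sigma>, of n] that by (simp add: k_def)
        hence ik: "inverse (real (Suc k)) \<le> inverse (real (Suc n0))"
          by (simp add: le_imp_inverse_le)
        have tk: "t < inverse (real (Suc k))" "t > 0" using tsmall[of k] tpos[of k] by (auto simp: t_def)
        have tt: "t < \<delta>" "t < r" "t > 0" using tk ik n0 by linarith+
        have s1: "f (xbar + t *\<^sub>R l) \<ge> f xbar + \<alpha> * t\<^sup>2" using spc tt by auto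
        have c1: "xbar + t *\<^sub>R l \<in> cball xbar t" "y k \<in> cball xbar t"
          using nl tt by (auto simp: dist_norm t_def tn_def norm_minus_commute)
        have "\<bar>f (y k) - f (xbar + t *\<^sub>R l)\<bar> \<le> K * t * norm (y k - (xbar + t *\<^sub>R l))"
          using Lip[OF c1(1) c1(2) tt(2)] .
        also have "norm (y k - (xbar + t *\<^sub>R l)) = t * norm (un k - l)"
          using tt by (simp add: yrep t_def scaleR_diff_right[symmetric])
        finally have s2: "\<bar>f (y k) - f (xbar + t *\<^sub>R l)\<bar> \<le> K * t * (t * norm (un k - l))" .
        have s3: "f (y k) \<le> f xbar + inverse (real (Suc k)) * t\<^sup>2"
          using y(3)[of k] by (simp add: t_def tn_def)
        have "\<alpha> * t\<^sup>2 \<le> (K * norm (un k - l) + inverse (real (Suc k))) * t\<^sup>2"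
          using s1 s2 s3 by (simp add: power2_eq_square algebra_simps abs_le_iff)
        hence "\<alpha> \<le> K * norm (un k - l) + inverse (real (Suc k))"
          using tt by (simp add: power2_eq_square)
        thus ?thesis by (simp add: k_def)
      qed
      have lim2: "(\<lambda>n. K * norm ((un \<circ> \<sigma>) n - l) + inverse (real (Suc (\<sigma> n)))) \<longlonglongrightarrow> K * norm (l - l) + 0"
      proof (intro tendsto_intros lim)
        show "(\<lambda>n. inverse (real (Suc (\<sigma> n)))) \<longlonglongrightarrow> 0"
          using LIMSEQ_subseq_LIMSEQ[OF LIMSEQ_inverse_real_of_nat \<sigma>] by (simp add: o_def)
      qed
      have "\<alpha> \<le> K * norm (l - l) + 0"
        by (rule LIMSEQ_le_const[OF lim2]) (use bound in blast)
      thus False using \<alpha> by simp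
    qed
  qed
qed

end
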